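(* Let $H$ be a graph with at least one edge and no isolated vertices, and let $t\ge 1$. Let $C$ be the graph obtained from $\mu_t(H)$ by adding $\ell\ge 1$ new vertices $x_1,\dots,x_\ell$, each adjacent only to the root $w$ of $\mu_t(H)$. If $S$ is a subset of $V(\mu_t(H))\setminus\{w\}$ of minimum size among those subsets $S'$ for which $S'\cup\{w\}$ is a determining set for $\mu_t(H)$, then $S\cup\{x_2,\dots,x_\ell\}$ is a minimum size determining set for $C$.
   Context: All graphs are finite and simple. For a graph $G$ with $V(G)=\{v_1,\dots,v_n\}$ and an integer $t\ge1$, the generalized Mycielskian $\mu_t(G)$ has vertex set $\{u_i^s: 1\le i\le n,\ 0\le s\le t\}\cup\{w\}$, where $u_i^0$ is identified with $v_i$. Its edges are: $u_i^0u_j^0$ for each edge $v_iv_j$ of $G$; $u_i^su_j^{s+1}$ and $u_j^su_i^{s+1}$ for each edge $v_iv_j$ of $G$ and each $0\le s<t$; and $u_i^tw$ for all $1\le i\le n$. The vertex $w$ is called the root, and $u_i^s$ is the shadow of $v_i$ at level $s$. A set $S\subseteq V(G)$ is a determining set for $G$ if the only automorphism of $G$ fixing every vertex of $S$ is the identity. *)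

theory Defs
  imports Main
begin

definition simple_graph :: "'a set \<Rightarrow> ('a \<Rightarrow> 'a \<Rightarrow> bool) \<Rightarrow> bool" where
  "simple_graph V E \<longleftrightarrow> finite V \<and> (\<forall>x y. E x y \<longrightarrow> E y x) \<and> (\<forall>x. \<not> E x x)
     \<and> (\<forall>x y. E x y \<longrightarrow> x \<in> V \<and> y \<in> V)"

definition has_edge :: "'a set \<Rightarrow> ('a \<Rightarrow> 'a \<Rightarrow> bool) \<Rightarrow> bool" where
  "has_edge V E \<longleftrightarrow> (\<exists>x\<in>V. \<exists>y\<in>V. E x y)"

definition no_isolated :: "'a set \<Rightarrow> ('a \<Rightarrow> 'a \<Rightarrow> bool) \<Rightarrow> bool" where
  "no_isolated V E \<longleftrightarrow> (\<forall>x\<in>V. \<exists>y\<in>V. E x y)"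

definition automorphism :: "'a set \<Rightarrow> ('a \<Rightarrow> 'a \<Rightarrow> bool) \<Rightarrow> ('a \<Rightarrow> 'a) \<Rightarrow> bool" where
  "automorphism V E f \<longleftrightarrow> bij_betw f V V \<and> (\<forall>x\<in>V. \<forall>y\<in>V. E x y \<longleftrightarrow> E (f x) (f y))"

definition determining_set :: "'a set \<Rightarrow> ('a \<Rightarrow> 'a \<Rightarrow> bool) \<Rightarrow> 'a set \<Rightarrow> bool" where
  "determining_set V E S \<longleftrightarrow> S \<subseteq> V \<and>
     (\<forall>f. automorphism V E f \<longrightarrow> (\<forall>s\<in>S. f s = s) \<longrightarrow> (\<forall>v\<in>V. f v = v))"

definition min_determining_set :: "'a set \<Rightarrow> ('a \<Rightarrow> 'a \<Rightarrow> bool) \<Rightarrow> 'a set \<Rightarrow> bool" where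
  "min_determining_set V E S \<longleftrightarrow> determining_set V E S \<and>
     (\<forall>S'. determining_set V E S' \<longrightarrow> card S \<le> card S')"

text \<open>Vertices of the generalized Mycielskian: shadows U v s (level s) and the root W.
  U v 0 is identified with v.\<close>
datatype 'a myc = U 'a nat | W

definition myc_V :: "'a set \<Rightarrow> nat \<Rightarrow> 'a myc set" where
  "myc_V V t = {U v s | v s. v \<in> V \<and> s \<le> t} \<union> {W}"

fun myc_E :: "'a set \<Rightarrow> ('a \<Rightarrow> 'a \<Rightarrow> bool) \<Rightarrow> nat \<Rightarrow> 'a myc \<Rightarrow> 'a myc \<Rightarrow> bool" where
  "myc_E V E t (U a s) (U b r) \<longleftrightarrow> a \<in> V \<and> b \<in> V \<and> s \<le> t \<and> r \<le> t \<and> E a b \<and>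
      ((s = 0 \<and> r = 0) \<or> r = s + 1 \<or> s = r + 1)"
| "myc_E V E t (U a s) W \<longleftrightarrow> a \<in> V \<and> s = t"
| "myc_E V E t W (U b r) \<longleftrightarrow> b \<in> V \<and> r = t"
| "myc_E V E t W W \<longleftrightarrow> False"

datatype 'a cvert = M "'a myc" | X nat

definition C_V :: "'a set \<Rightarrow> nat \<Rightarrow> nat \<Rightarrow> 'a cvert set" where
  "C_V V t l = M ` myc_V V t \<union> X ` {1..l}"

fun C_E :: "'a set \<Rightarrow> ('a \<Rightarrow> 'a \<Rightarrow> bool) \<Rightarrow> nat \<Rightarrow> nat \<Rightarrow> 'a cvert \<Rightarrow> 'a cvert \<Rightarrow> bool" where
  "C_E V E t l (M a) (M b) \<longleftrightarrow> myc_E V E t a b"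
| "C_E V E t l (M a) (X i) \<longleftrightarrow> a = W \<and> 1 \<le> i \<and> i \<le> l"
| "C_E V E t l (X i) (M b) \<longleftrightarrow> b = W \<and> 1 \<le> i \<and> i \<le> l"
| "C_E V E t l (X i) (X j) \<longleftrightarrow> False"

end

theory Submission
  imports Defs
begin

lemma myc_E_in: "myc_E V E t a b \<Longrightarrow> a \<in> myc_V V t \<and> b \<in> myc_V V t"
  by (cases a; cases b) (auto simp: myc_V_def)

lemma C_E_in: "C_E V E t l x y \<Longrightarrow> x \<in> C_V V t l \<and> y \<in> C_V V t l"
  by (cases x; cases y) (auto simp: C_V_def myc_V_def dest: myc_E_in)

lemma finite_myc_V: "finite V \<Longrightarrow> finite (myc_V V t)"
proof -
  assume "finite V"
  have "myc_V V t = (\<lambda>(v,s). U v s) ` (V \<times> {..t}) \<union> {W}"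
    by (auto simp: myc_V_def)
  thus ?thesis using \<open>finite V\<close> by simp
qed

lemma X_nbr: "1 \<le> i \<Longrightarrow> i \<le> l \<Longrightarrow> C_E V E t l (X i) z \<longleftrightarrow> z = M W"
  by (cases z) auto

lemma M_two_nbrs:
  assumes "simple_graph V E" "has_edge V E" "no_isolated V E" "t \<ge> 1" "l \<ge> 1"
    and a: "a \<in> myc_V V t"
  shows "\<exists>z1 z2. z1 \<noteq> z2 \<and> C_E V E t l (M a) z1 \<and> C_E V E t l (M a) z2"
proof (cases a)
  case (U v s)
  then have v: "v \<in> V" "s \<le> t" using a by (auto simp: myc_V_def)
  then obtain u where u: "u \<in> V" "E v u" using assms(3) by (auto simp: no_isolated_def)
  show ?thesis
  proof (intro exI conjI)
    show "M (U u (s-1)) \<noteq> (if s < t then M (U u (s+1)) else M W)" by auto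
    show "C_E V E t l (M a) (M (U u (s-1)))" using U v u by auto
    show "C_E V E t l (M a) (if s < t then M (U u (s+1)) else M W)" using U v u by auto
  qed
next
  case W
  obtain v where v: "v \<in> V" using assms(2) by (auto simp: has_edge_def)
  show ?thesis
    by (rule exI[of _ "M (U v t)"], rule exI[of _ "X 1"]) (use W v assms(5) in auto)
qed

theorem mainTheorem1:
  fixes V :: "'a set" and E :: "'a \<Rightarrow> 'a \<Rightarrow> bool" and t l :: nat and S :: "'a myc set"
  assumes "simple_graph V E" and "has_edge V E" and "no_isolated V E"
    and "t \<ge> 1" and "l \<ge> 1"
    and "S \<subseteq> myc_V V t - {W}"
    and "determining_set (myc_V V t) (myc_E V E t) (S \<union> {W})"
    and "\<forall>S'. S' \<subseteq> myc_V V t - {W} \<longrightarrow> determining_set (myc_V V t) (myc_E V E t) (S' \<union> {W})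
            \<longrightarrow> card S \<le> card S'"
  shows "min_determining_set (C_V V t l) (C_E V E t l) (M ` S \<union> X ` {2..l})"
proof -
  let ?MV = "myc_V V t" let ?ME = "myc_E V E t" let ?CV = "C_V V t l" let ?CE = "C_E V E t l"
  have finV: "finite V" using assms(1) simple_graph_def by auto
  have finMV: "finite ?MV" using finite_myc_V[OF finV] .
  have finCV: "finite ?CV" by (simp add: C_V_def finMV)
  have SMV: "S \<subseteq> ?MV" using assms(6) by auto
  have finS: "finite S" using finite_subset[OF SMV finMV] .
  have MWin: "M W \<in> ?CV" by (simp add: C_V_def myc_V_def)
  have Xin: "\<And>i. 1 \<le> i \<Longrightarrow> i \<le> l \<Longrightarrow> X i \<in> ?CV" by (auto simp: C_V_def)
  have Min: "\<And>a. a \<in> ?MV \<Longrightarrow> M a \<in> ?CV" by (auto simp: C_V_def)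
  have MinD: "\<And>a. M a \<in> ?CV \<Longrightarrow> a \<in> ?MV" by (auto simp: C_V_def)
  have XinD: "\<And>i. X i \<in> ?CV \<Longrightarrow> 1 \<le> i \<and> i \<le> l" by (auto simp: C_V_def)
  have det: "determining_set ?CV ?CE (M ` S \<union> X ` {2..l})"
    unfolding determining_set_def
  proof (intro conjI allI impI)
    show "M ` S \<union> X ` {2..l} \<subseteq> ?CV" using SMV by (auto simp: C_V_def)
    fix f assume aut: "automorphism ?CV ?CE f" and fixT: "\<forall>s\<in>M ` S \<union> X ` {2..l}. f s = s"
    have bij: "bij_betw f ?CV ?CV" and pres: "\<forall>x\<in>?CV. \<forall>y\<in>?CV. ?CE x y \<longleftrightarrow> ?CE (f x) (f y)"
      using aut unfolding automorphism_def by auto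
    have inj: "inj_on f ?CV" using bij unfolding bij_betw_def by auto
    have img: "f ` ?CV = ?CV" using bij unfolding bij_betw_def by auto
    have fin: "\<And>x. x \<in> ?CV \<Longrightarrow> f x \<in> ?CV" using img by auto
    have fX_nb: "\<And>i w. 1 \<le> i \<Longrightarrow> i \<le> l \<Longrightarrow> w \<in> ?CV \<Longrightarrow> ?CE (f (X i)) w \<longleftrightarrow> w = f (M W)"
    proof -
      fix i w assume i: "1 \<le> i" "i \<le> l" and w: "w \<in> ?CV"
      then obtain w' where w': "w' \<in> ?CV" "w = f w'" using img by (metis imageE)
      have "?CE (f (X i)) w \<longleftrightarrow> ?CE (X i) w'" using pres Xin[OF i] w' by auto
      also have "\<dots> \<longleftrightarrow> w' = M W" using X_nbr i by blast
      also have "\<dots> \<longleftrightarrow> w = f (M W)" using inj w' MWin by (auto dest: inj_onD)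
      finally show "?CE (f (X i)) w \<longleftrightarrow> w = f (M W)" .
    qed
    have fX: "\<And>i. 1 \<le> i \<Longrightarrow> i \<le> l \<Longrightarrow> \<exists>j. f (X i) = X j \<and> 1 \<le> j \<and> j \<le> l"
    proof -
      fix i assume i: "1 \<le> i" "i \<le> l"
      have fx: "f (X i) \<in> ?CV" using fin Xin i by auto
      show "\<exists>j. f (X i) = X j \<and> 1 \<le> j \<and> j \<le> l"
      proof (cases "f (X i)")
        case (M a)
        then have a: "a \<in> ?MV" using fx MinD by auto
        obtain z1 z2 where z: "z1 \<noteq> z2" "?CE (M a) z1" "?CE (M a) z2"
          using M_two_nbrs[OF assms(1-5) a] by blast
        have "z1 \<in> ?CV" "z2 \<in> ?CV" using C_E_in z by blast+
        then have "z1 = f (M W)" "z2 = f (M W)" using fX_nb[OF i] z M by auto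
        then show ?thesis using z by simp
      next
        case (X j)
        then show ?thesis using fx XinD by auto
      qed
    qed
    have fW: "f (M W) = M W"
    proof -
      obtain j where j: "f (X 1) = X j" "1 \<le> j" "j \<le> l" using fX[of 1] assms(5) by auto
      have "?CE (f (X 1)) (M W)" using j by simp
      thus ?thesis using fX_nb[of 1 "M W"] assms(5) MWin by auto
    qed
    have fM: "\<And>a. a \<in> ?MV \<Longrightarrow> \<exists>b\<in>?MV. f (M a) = M b"
    proof -
      fix a assume a: "a \<in> ?MV"
      have fa: "f (M a) \<in> ?CV" using fin Min a by auto
      obtain z1 z2 where z: "z1 \<noteq> z2" "?CE (M a) z1" "?CE (M a) z2"
        using M_two_nbrs[OF assms(1-5) a] by blast
      have zin: "z1 \<in> ?CV" "z2 \<in> ?CV" using C_E_in z by blast+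
      have z': "?CE (f (M a)) (f z1)" "?CE (f (M a)) (f z2)" "f z1 \<noteq> f z2"
        using pres z zin Min[OF a] inj by (auto dest: inj_onD)
      show "\<exists>b\<in>?MV. f (M a) = M b"
      proof (cases "f (M a)")
        case (M b) then show ?thesis using fa MinD by auto
      next
        case (X j)
        then have "1 \<le> j" "j \<le> l" using fa XinD by auto
        then show ?thesis using z' X X_nbr by metis
      qed
    qed
    define g where "g a = (case f (M a) of M b \<Rightarrow> b | X _ \<Rightarrow> a)" for a
    have gM: "\<And>a. a \<in> ?MV \<Longrightarrow> f (M a) = M (g a) \<and> g a \<in> ?MV" using fM g_def by force
    have gaut: "automorphism ?MV ?ME g"
      unfolding automorphism_def
    proof (intro conjI ballI)
      show "bij_betw g ?MV ?MV"
        unfolding bij_betw_def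
      proof
        show "inj_on g ?MV"
        proof (rule inj_onI)
          fix a b assume ab: "a \<in> ?MV" "b \<in> ?MV" "g a = g b"
          then have "f (M a) = f (M b)" using gM by metis
          then have "M a = M b" using inj Min ab by (auto dest: inj_onD)
          then show "a = b" by simp
        qed
        show "g ` ?MV = ?MV"
        proof
          show "g ` ?MV \<subseteq> ?MV" using gM by auto
          show "?MV \<subseteq> g ` ?MV"
          proof
            fix b assume b: "b \<in> ?MV"
            then obtain y where y: "y \<in> ?CV" "M b = f y" using img Min by (metis imageE)
            show "b \<in> g ` ?MV"
            proof (cases y)
              case (M a)
              then have "a \<in> ?MV" using y MinD by auto
              then show ?thesis using gM y M by (metis cvert.inject(1) image_eqI)
            next
              case (X j)
              then show ?thesis using fX XinD y by (metis cvert.distinct(1))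
            qed
          qed
        qed
      qed
      fix a b assume ab: "a \<in> ?MV" "b \<in> ?MV"
      have "?ME a b \<longleftrightarrow> ?CE (M a) (M b)" by simp
      also have "\<dots> \<longleftrightarrow> ?CE (f (M a)) (f (M b))" using pres Min[OF ab(1)] Min[OF ab(2)] by blast
      also have "\<dots> \<longleftrightarrow> ?ME (g a) (g b)" using gM ab by simp
      finally show "?ME a b \<longleftrightarrow> ?ME (g a) (g b)" .
    qed
    have gfix: "\<forall>s\<in>S \<union> {W}. g s = s"
    proof
      fix s assume s: "s \<in> S \<union> {W}"
      have sM: "s \<in> ?MV" using s SMV by (auto simp: myc_V_def)
      have "f (M s) = M s" using s fixT fW by auto
      then show "g s = s" using gM[OF sM] by simp
    qed
    have gid: "\<forall>v\<in>?MV. g v = v" using assms(7) gaut gfix unfolding determining_set_def by blast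
    show "\<forall>v\<in>?CV. f v = v"
    proof
      fix v assume v: "v \<in> ?CV"
      show "f v = v"
      proof (cases v)
        case (M a)
        then show ?thesis using gM gid MinD v by auto
      next
        case (X i)
        then have i: "1 \<le> i" "i \<le> l" using XinD v by auto
        show ?thesis
        proof (cases "i \<ge> 2")
          case True then show ?thesis using fixT X i by auto
        next
          case False
          then have i1: "i = 1" using i by auto
          obtain j where j: "f (X 1) = X j" "1 \<le> j" "j \<le> l" using fX[of 1] assms(5) by auto
          have "j = 1"
          proof (rule ccontr)
            assume "j \<noteq> 1"
            then have "f (X j) = X j" using fixT j by auto
            then have "f (X 1) = f (X j)" using j by simp
            then have "X 1 = X j" using inj_onD[OF inj _ Xin[of 1] Xin[of j]] j assms(5) by auto
            then show False using \<open>j \<noteq> 1\<close> by simp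
          qed
          then show ?thesis using X i1 j by simp
        qed
      qed
    qed
  qed
  show ?thesis unfolding min_determining_set_def
  proof (intro conjI allI impI)
    show "determining_set ?CV ?CE (M ` S \<union> X ` {2..l})" by (rule det)
    fix T' assume T': "determining_set ?CV ?CE T'"
    have T'sub: "T' \<subseteq> ?CV" using T' unfolding determining_set_def by auto
    have finT': "finite T'" using finite_subset[OF T'sub finCV] .
    define A where "A = {i\<in>{1..l}. X i \<notin> T'}"
    have finA: "finite A" and Asub: "A \<subseteq> {1..l}" by (auto simp: A_def)
    have Aone: "\<forall>i\<in>A. \<forall>j\<in>A. i = j"
    proof (intro ballI, rule ccontr)
      fix i j assume i: "i \<in> A" and j: "j \<in> A" and ij: "i \<noteq> j"
      define f :: "'a cvert \<Rightarrow> 'a cvert" where "f z = (if z = X i then X j else if z = X j then X i else z)" for z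
      have ir: "1 \<le> i" "i \<le> l" "1 \<le> j" "j \<le> l" using i j by (auto simp: A_def)
      have fM': "\<And>a. f (M a) = M a" by (simp add: f_def)
      have fX': "\<And>k. f (X k) = X (if k = i then j else if k = j then i else k)" by (simp add: f_def)
      have faut: "automorphism ?CV ?CE f"
        unfolding automorphism_def
      proof (intro conjI ballI)
        show "bij_betw f ?CV ?CV"
          by (rule bij_betw_byWitness[where f'=f]) (use ir in \<open>auto simp: fM' fX' C_V_def\<close>)
        fix x y assume xy: "x \<in> ?CV" "y \<in> ?CV"
        show "?CE x y \<longleftrightarrow> ?CE (f x) (f y)"
          using xy ir by (cases x; cases y) (auto simp: fM' fX' dest!: XinD)
      qed
      have "\<forall>s\<in>T'. f s = s" using i j by (auto simp: f_def A_def)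
      hence "\<forall>v\<in>?CV. f v = v" using T' faut unfolding determining_set_def by blast
      then have "f (X i) = X i" using Xin ir by auto
      then show False using ij by (simp add: f_def)
    qed
    have cardA: "card A \<le> 1" using card_le_Suc0_iff_eq[OF finA] Aone by simp
    define S' where "S' = {a. M a \<in> T'} - {W}"
    have S'sub: "S' \<subseteq> ?MV - {W}" using T'sub MinD by (auto simp: S'_def)
    have S'det: "determining_set ?MV ?ME (S' \<union> {W})"
      unfolding determining_set_def
    proof (intro conjI allI impI)
      show "S' \<union> {W} \<subseteq> ?MV" using S'sub by (auto simp: myc_V_def)
      fix g assume gaut: "automorphism ?MV ?ME g" and gfix: "\<forall>s\<in>S' \<union> {W}. g s = s"
      have gbij: "bij_betw g ?MV ?MV" and gpres: "\<forall>x\<in>?MV. \<forall>y\<in>?MV. ?ME x y \<longleftrightarrow> ?ME (g x) (g y)"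
        using gaut unfolding automorphism_def by auto
      have ginj: "inj_on g ?MV" and gimg: "g ` ?MV = ?MV" using gbij unfolding bij_betw_def by auto
      have WMV: "W \<in> ?MV" by (simp add: myc_V_def)
      have gW: "g W = W" using gfix by auto
      have gWiff: "\<And>a. a \<in> ?MV \<Longrightarrow> g a = W \<longleftrightarrow> a = W"
        using ginj gW WMV by (metis inj_onD)
      define f where "f z = (case z of M a \<Rightarrow> M (g a) | X i \<Rightarrow> X i)" for z
      have faut: "automorphism ?CV ?CE f"
        unfolding automorphism_def
      proof (intro conjI ballI)
        show "bij_betw f ?CV ?CV"
          unfolding bij_betw_def
        proof
          show "inj_on f ?CV"
          proof (rule inj_onI)
            fix x y assume xy: "x \<in> ?CV" "y \<in> ?CV" "f x = f y"
            then show "x = y" using ginj MinD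
              by (cases x; cases y) (auto simp: f_def dest: inj_onD)
          qed
          have "f ` ?CV = (\<lambda>a. M (g a)) ` ?MV \<union> X ` {1..l}"
          proof -
            have e1: "f ` (M ` ?MV) = (\<lambda>a. M (g a)) ` ?MV" by (simp add: image_image f_def)
            have e2: "f ` (X ` {1..l}) = X ` {1..l}" by (simp add: image_image f_def)
            show ?thesis unfolding C_V_def image_Un e1 e2 ..
          qed
          also have "(\<lambda>a. M (g a)) ` ?MV = M ` ?MV" using gimg by (metis image_image)
          finally show "f ` ?CV = ?CV" by (simp add: C_V_def)
        qed
        fix x y assume xy: "x \<in> ?CV" "y \<in> ?CV"
        show "?CE x y \<longleftrightarrow> ?CE (f x) (f y)"
          using xy gpres gWiff MinD by (cases x; cases y) (auto simp: f_def)
      qed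
      have "\<forall>s\<in>T'. f s = s"
      proof
        fix s assume s: "s \<in> T'"
        show "f s = s"
        proof (cases s)
          case (M a)
          then have "a \<in> S' \<union> {W}" using s by (auto simp: S'_def)
          then show ?thesis using gfix M by (auto simp add: f_def)
        qed (simp add: f_def)
      qed
      hence fid: "\<forall>v\<in>?CV. f v = v" using T' faut unfolding determining_set_def by blast
      show "\<forall>v\<in>?MV. g v = v"
      proof
        fix v assume "v \<in> ?MV"
        then have "f (M v) = M v" using fid Min by auto
        then show "g v = v" by (simp add: f_def)
      qed
    qed
    have cS: "card S \<le> card S'" using assms(8) S'sub S'det by blast
    have finS': "finite S'" using finite_subset[OF S'sub] finMV by auto
    have "M ` S' \<union> X ` ({1..l} - A) \<subseteq> T'" by (auto simp: S'_def A_def)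
    hence c1: "card (M ` S' \<union> X ` ({1..l} - A)) \<le> card T'" using card_mono finT' by blast
    have MX: "\<And>P Q. M ` (P::'a myc set) \<inter> X ` Q = {}" by blast
    have d1: "card (M ` S' \<union> X ` ({1..l} - A)) = card (M ` S') + card (X ` ({1..l} - A) :: 'a cvert set)"
      by (rule card_Un_disjoint[OF finite_imageI[OF finS'] finite_imageI MX]) simp
    have d2: "card (M ` S') = card S'" by (rule card_image) (simp add: inj_on_def)
    have d3: "card (X ` ({1..l} - A) :: 'a cvert set) = card ({1..l} - A)" by (rule card_image) (simp add: inj_on_def)
    have d4: "card ({1..l} - A) = l - card A"
      using card_Diff_subset[OF finA Asub] by simp
    have c2: "card (M ` S' \<union> X ` ({1..l} - A)) = card S' + (l - card A)" using d1 d2 d3 d4 by simp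
    have e1: "card (M ` S \<union> X ` {2..l}) = card (M ` S) + card (X ` {2..l} :: 'a cvert set)"
      by (rule card_Un_disjoint[OF finite_imageI[OF finS] finite_imageI MX]) simp
    have e2: "card (M ` S) = card S" by (rule card_image) (simp add: inj_on_def)
    have e3: "card (X ` {2..l} :: 'a cvert set) = card {2..l}" by (rule card_image) (simp add: inj_on_def)
    have c3: "card (M ` S \<union> X ` {2..l}) = card S + (l - 1)" using e1 e2 e3 by simp
    show "card (M ` S \<union> X ` {2..l}) \<le> card T'" using c1 c2 c3 cS cardA by linarith
  qed
qed

end
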